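(* Let $H$ be a graph, $v\in V(H)$, and let $G$ be the graph obtained from $H$ by attaching a path at $v$: new vertices $v_1,\ldots,v_m$ are added together with the edges $\{v_{i},v_{i+1}\}$ for $i=0,\ldots,m-1$, where $v_0=v$. If $A\in\mathcal{S}(G)$, $X\in\overline{\mathcal{S}_0}(G^c)$, and $AX-XA=0$, then $X\in\overline{\mathcal{S}_0}(G'^c)$, where $G'=G+\{\{v_i,v_j\}: 0\le i<j\le m\}$; that is, $x_{v_iv_j}=0$ for all $0\le i<j\le m$.
   Context: All graphs are finite, simple, undirected. For a graph $G$ on $n$ vertices labelled $1,\ldots,n$, $\mathcal{S}(G)$ is the set of real symmetric $n\times n$ matrices $A=(a_{ij})$ with $a_{ij}\neq0$ iff $\{i,j\}\in E(G)$ for $i\neq j$ (diagonal arbitrary). For a graph $K$ on the same vertex set, $\overline{\mathcal{S}_0}(K)$ is the set of real symmetric matrices whose $(i,j)$ entry is zero whenever $i=j$ or $\{i,j\}\notin E(K)$; $K^c$ is the complement of $K$. $G+F$ denotes the graph obtained from $G$ by adding the edge set $F$. *)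

theory Defs
  imports Complex_Main
begin

text \<open>A finite simple graph: finite vertex set V and a symmetric,
irreflexive edge relation E on V. Matrices indexed by V are functions
'a => 'a => real (only entries on V x V matter).\<close>

definition simple_graph :: "'a set \<Rightarrow> ('a \<Rightarrow> 'a \<Rightarrow> bool) \<Rightarrow> bool" where
  "simple_graph V E \<longleftrightarrow> finite V \<and> (\<forall>x y. E x y \<longrightarrow> x \<in> V \<and> y \<in> V)
     \<and> (\<forall>x y. E x y \<longrightarrow> E y x) \<and> (\<forall>x. \<not> E x x)"

definition sym_on :: "'a set \<Rightarrow> ('a \<Rightarrow> 'a \<Rightarrow> real) \<Rightarrow> bool" where
  "sym_on V A \<longleftrightarrow> (\<forall>i\<in>V. \<forall>j\<in>V. A i j = A j i)"

definition S_mat :: "'a set \<Rightarrow> ('a \<Rightarrow> 'a \<Rightarrow> bool) \<Rightarrow> ('a \<Rightarrow> 'a \<Rightarrow> real) \<Rightarrow> bool" where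
  "S_mat V E A \<longleftrightarrow> sym_on V A \<and> (\<forall>i\<in>V. \<forall>j\<in>V. i \<noteq> j \<longrightarrow> (A i j \<noteq> 0 \<longleftrightarrow> E i j))"

definition S0bar :: "'a set \<Rightarrow> ('a \<Rightarrow> 'a \<Rightarrow> bool) \<Rightarrow> ('a \<Rightarrow> 'a \<Rightarrow> real) \<Rightarrow> bool" where
  "S0bar V K X \<longleftrightarrow> sym_on V X \<and> (\<forall>i\<in>V. \<forall>j\<in>V. (i = j \<or> \<not> K i j) \<longrightarrow> X i j = 0)"

definition compl_graph :: "'a set \<Rightarrow> ('a \<Rightarrow> 'a \<Rightarrow> bool) \<Rightarrow> 'a \<Rightarrow> 'a \<Rightarrow> bool" where
  "compl_graph V E x y \<longleftrightarrow> x \<in> V \<and> y \<in> V \<and> x \<noteq> y \<and> \<not> E x y"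

definition mat_mul :: "'a set \<Rightarrow> ('a \<Rightarrow> 'a \<Rightarrow> real) \<Rightarrow> ('a \<Rightarrow> 'a \<Rightarrow> real) \<Rightarrow> 'a \<Rightarrow> 'a \<Rightarrow> real" where
  "mat_mul V A B i j = (\<Sum>k\<in>V. A i k * B k j)"

text \<open>G obtained from H by attaching the path p 0 = v, p 1, ..., p m at v\<close>
definition path_verts :: "'a set \<Rightarrow> (nat \<Rightarrow> 'a) \<Rightarrow> nat \<Rightarrow> 'a set" where
  "path_verts VH p m = VH \<union> p ` {1..m}"

definition path_edges :: "('a \<Rightarrow> 'a \<Rightarrow> bool) \<Rightarrow> (nat \<Rightarrow> 'a) \<Rightarrow> nat \<Rightarrow> 'a \<Rightarrow> 'a \<Rightarrow> bool" where
  "path_edges EH p m x y \<longleftrightarrow> EH x y \<or>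
     (\<exists>i<m. (x = p i \<and> y = p (Suc i)) \<or> (x = p (Suc i) \<and> y = p i))"

definition add_path_clique :: "('a \<Rightarrow> 'a \<Rightarrow> bool) \<Rightarrow> (nat \<Rightarrow> 'a) \<Rightarrow> nat \<Rightarrow> 'a \<Rightarrow> 'a \<Rightarrow> bool" where
  "add_path_clique E p m x y \<longleftrightarrow> E x y \<or>
     (\<exists>i j. i < j \<and> j \<le> m \<and> ((x = p i \<and> y = p j) \<or> (x = p j \<and> y = p i)))"

end

theory Submission
  imports Defs
begin

theorem corollary3p7:
  fixes VH :: "'a set" and EH :: "'a \<Rightarrow> 'a \<Rightarrow> bool" and v :: 'a
    and p :: "nat \<Rightarrow> 'a" and m :: nat and A X :: "'a \<Rightarrow> 'a \<Rightarrow> real"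
  assumes H: "simple_graph VH EH"
    and v: "v \<in> VH"
    and p0: "p 0 = v"
    and pinj: "inj_on p {0..m}"
    and pnew: "p ` {1..m} \<inter> VH = {}"
    and A: "S_mat (path_verts VH p m) (path_edges EH p m) A"
    and X: "S0bar (path_verts VH p m) (compl_graph (path_verts VH p m) (path_edges EH p m)) X"
    and comm: "\<forall>i\<in>path_verts VH p m. \<forall>j\<in>path_verts VH p m.
                 mat_mul (path_verts VH p m) A X i j - mat_mul (path_verts VH p m) X A i j = 0"
  shows "S0bar (path_verts VH p m)
           (compl_graph (path_verts VH p m) (add_path_clique (path_edges EH p m) p m)) X"
proof -
  define V where "V = path_verts VH p m"
  define E where "E = path_edges EH p m"
  have finV: "finite V" using H unfolding V_def path_verts_def simple_graph_def by auto
  have pV: "p l \<in> V" if "l \<le> m" for l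
  proof (cases "l = 0")
    case True then show ?thesis using v p0 unfolding V_def path_verts_def by auto
  next
    case False then show ?thesis using that unfolding V_def path_verts_def by auto
  qed
  have Xsym: "X i j = X j i" if "i \<in> V" "j \<in> V" for i j
    using X that unfolding V_def S0bar_def sym_on_def by auto
  have Asym: "A i j = A j i" if "i \<in> V" "j \<in> V" for i j
    using A that unfolding V_def S_mat_def sym_on_def by auto
  have Xedge: "X i j = 0" if "i \<in> V" "j \<in> V" "i = j \<or> E i j" for i j
    using X that unfolding V_def E_def S0bar_def compl_graph_def by auto
  have Eedge: "E (p l) (p (Suc l))" if "l < m" for l
    unfolding E_def path_edges_def using that by auto
  have AS: "\<forall>i\<in>V. \<forall>j\<in>V. i \<noteq> j \<longrightarrow> (A i j \<noteq> 0 \<longleftrightarrow> E i j)"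
    using A unfolding S_mat_def V_def E_def by simp
  have Anz: "A (p l) (p (Suc l)) \<noteq> 0" if "l < m" for l
  proof -
    have "p l \<noteq> p (Suc l)" using inj_on_eq_iff[OF pinj, of l "Suc l"] that by auto
    then show ?thesis using AS Eedge[OF that] pV[of l] pV[of "Suc l"] that by auto
  qed
  have nb: "A (p l) k = 0" if l: "1 \<le> l" "l \<le> m" and k: "k \<in> V" "k \<noteq> p l"
      "k \<noteq> p (l - 1)" "\<not> (l < m \<and> k = p (Suc l))" for l k
  proof (rule ccontr)
    assume "A (p l) k \<noteq> 0"
    then have "E (p l) k" using AS k pV[OF l(2)] by auto
    moreover have "p l \<in> p ` {1..m}" using l by auto
    then have "p l \<notin> VH" using pnew by blast
    moreover from this have "\<not> EH (p l) k" using H unfolding simple_graph_def by blast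
    ultimately obtain i where i: "i < m" "(p l = p i \<and> k = p (Suc i)) \<or> (p l = p (Suc i) \<and> k = p i)"
      unfolding E_def path_edges_def by auto
    from i(2) show False
    proof
      assume h: "p l = p i \<and> k = p (Suc i)"
      then have "l = i" using pinj l i(1) unfolding inj_on_def by auto
      then show False using h k i by auto
    next
      assume h: "p l = p (Suc i) \<and> k = p i"
      then have "l = Suc i" using pinj l i(1) unfolding inj_on_def by auto
      then show False using h k i by auto
    qed
  qed
  have main: "a < b \<Longrightarrow> b \<le> m \<Longrightarrow> X (p a) (p b) = 0" for a b
  proof (induction "(b - a) * Suc m + (m - b)" arbitrary: a b rule: less_induct)
    case less
    have small: "X (p a') (p b') = 0" if "a' \<le> m" "b' \<le> m" "b' - a' < b - a" "a' - b' < b - a" for a' b'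
    proof -
      consider "a' = b'" | "a' < b'" | "b' < a'" by linarith
      then show ?thesis
      proof cases
        case 1 then show ?thesis using Xedge pV that by auto
      next
        case 2
        have "(b' - a') * Suc m + (m - b') < (b - a) * Suc m + (m - b)"
        proof -
          have "b' - a' + 1 \<le> b - a" using that by linarith
          then have "(b' - a' + 1) * Suc m \<le> (b - a) * Suc m" by (rule mult_right_mono) simp
          moreover have "(b' - a') * Suc m + (m - b') < (b' - a' + 1) * Suc m" by simp
          ultimately show ?thesis by linarith
        qed
        then show ?thesis using less.hyps[of b' a'] 2 that(2) by blast
      next
        case 3
        have "(a' - b') * Suc m + (m - a') < (b - a) * Suc m + (m - b)"
        proof -
          have "a' - b' + 1 \<le> b - a" using that by linarith
          then have "(a' - b' + 1) * Suc m \<le> (b - a) * Suc m" by (rule mult_right_mono) simp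
          moreover have "(a' - b') * Suc m + (m - a') < (a' - b' + 1) * Suc m" by simp
          ultimately show ?thesis by linarith
        qed
        then have "X (p b') (p a') = 0" using less.hyps[of a' b'] 3 that(1) by blast
        then show ?thesis using Xsym[OF pV[OF that(1)] pV[OF that(2)]] by simp
      qed
    qed
    show ?case
    proof (cases "b = Suc a")
      case True then show ?thesis using Xedge Eedge pV less.prems by auto
    next
      case False
      then have ab: "a + 2 \<le> b" using less.prems by linarith
      have next0: "X (p (Suc a)) (p (Suc b)) = 0" if "b < m"
      proof -
        have "(Suc b - Suc a) * Suc m + (m - Suc b) < (b - a) * Suc m + (m - b)" using that by simp
        moreover have "Suc a < Suc b" "Suc b \<le> m" using that less.prems by auto
        ultimately show ?thesis using less.hyps[of "Suc b" "Suc a"] by blast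
      qed
      have AX: "mat_mul V A X (p (Suc a)) (p b) = A (p (Suc a)) (p a) * X (p a) (p b)"
      proof -
        have "mat_mul V A X (p (Suc a)) (p b) =
            (\<Sum>k\<in>V. if k = p a then A (p (Suc a)) (p a) * X (p a) (p b) else 0)"
          unfolding mat_mul_def
        proof (rule sum.cong[OF refl])
          fix k assume kV: "k \<in> V"
          show "A (p (Suc a)) k * X k (p b) = (if k = p a then A (p (Suc a)) (p a) * X (p a) (p b) else 0)"
          proof (cases "k = p a")
            case True then show ?thesis by simp
          next
            case ka: False
            consider "k = p (Suc a)" | "k = p (Suc (Suc a))" | "k \<noteq> p (Suc a)" "k \<noteq> p (Suc (Suc a))" by blast
            then show ?thesis
            proof cases
              case 1 then show ?thesis using small[of "Suc a" b] less.prems ab ka by auto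
            next
              case 2 then show ?thesis using small[of "Suc (Suc a)" b] less.prems ab ka by auto
            next
              case 3
              have "A (p (Suc a)) k = 0"
                by (rule nb) (use 3 ka kV less.prems ab in auto)
              then show ?thesis using ka by simp
            qed
          qed
        qed
        also have "\<dots> = A (p (Suc a)) (p a) * X (p a) (p b)"
          using finV pV[of a] less.prems by simp
        finally show ?thesis .
      qed
      have XA: "mat_mul V X A (p (Suc a)) (p b) = 0"
        unfolding mat_mul_def
      proof (rule sum.neutral, rule ballI)
        fix k assume kV: "k \<in> V"
        consider "k = p b" | "k = p (b - 1)" | "b < m \<and> k = p (Suc b)"
          | "k \<noteq> p b" "k \<noteq> p (b - 1)" "\<not> (b < m \<and> k = p (Suc b))" by blast
        then show "X (p (Suc a)) k * A k (p b) = 0"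
        proof cases
          case 1 then show ?thesis using small[of "Suc a" b] less.prems ab by auto
        next
          case 2 then show ?thesis using small[of "Suc a" "b - 1"] less.prems ab by auto
        next
          case 3 then show ?thesis using next0 by auto
        next
          case 4
          have "A (p b) k = 0" by (rule nb) (use 4 kV less.prems ab in auto)
          then show ?thesis using Asym[OF kV pV[of b]] less.prems by simp
        qed
      qed
      have "mat_mul V A X (p (Suc a)) (p b) - mat_mul V X A (p (Suc a)) (p b) = 0"
        using comm pV[of "Suc a"] pV[of b] less.prems ab unfolding V_def by auto
      then have "A (p (Suc a)) (p a) * X (p a) (p b) = 0" using AX XA by simp
      moreover have "A (p (Suc a)) (p a) \<noteq> 0"
        using Anz[of a] Asym[OF pV[of a] pV[of "Suc a"]] less.prems ab by simp
      ultimately show ?thesis by simp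
    qed
  qed
  show ?thesis
    unfolding S0bar_def V_def[symmetric] E_def[symmetric]
  proof (intro conjI ballI impI)
    show "sym_on V X" using X unfolding V_def S0bar_def by simp
  next
    fix i j assume ij: "i \<in> V" "j \<in> V" "i = j \<or> \<not> compl_graph V (add_path_clique E p m) i j"
    then consider "i = j" | "E i j" | "\<exists>a b. a < b \<and> b \<le> m \<and> ((i = p a \<and> j = p b) \<or> (i = p b \<and> j = p a))"
      unfolding compl_graph_def add_path_clique_def by blast
    then show "X i j = 0"
    proof cases
      case 3
      then obtain a b where "a < b" "b \<le> m" "(i = p a \<and> j = p b) \<or> (i = p b \<and> j = p a)" by blast
      then show ?thesis using main[of a b] Xsym[OF pV[of a] pV[of b]] by auto
    qed (use Xedge ij in auto)
  qed
qed

end
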